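(* Let $c,d>0$, $l\in\mathbb{Z}_+$ and $m\in\{0,\dots,l\}$. Then $$\lim_{q\uparrow1}R_{l-m}\big(q^{-l}-\tfrac dc q^{-l};\tfrac cd,2l;q\big)=\frac{(m+1)_{l-m}}{(l+m+1)_{l-m}}\Big(1+\frac dc\Big)^{l-m}R^{(m,m)}_{l-m}\Big(\frac{c-d}{c+d}\Big).$$
   Context: $(a)_n=a(a+1)\cdots(a+n-1)$. $R^{(\alpha,\beta)}_n$ is the Jacobi polynomial of degree $n$ normalized by $R^{(\alpha,\beta)}_n(1)=1$. Dual $q$-Krawtchouk value: $R_j(q^{-l}-\tfrac dc q^{-l};\tfrac cd,2l;q)=\sum_{k=0}^{j}\frac{(q^{-j};q)_k(q^{-l};q)_k(-\frac dc q^{-l};q)_k}{(q^{-2l};q)_k(q;q)_k}q^k$ with $(a;q)_k=\prod_{i=0}^{k-1}(1-aq^i)$. *)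

theory Defs
  imports Complex_Main
begin

definition qpoch :: "real \<Rightarrow> real \<Rightarrow> nat \<Rightarrow> real" where
  "qpoch a q k = (\<Prod>i<k. 1 - a * q ^ i)"

text \<open>Dual q-Krawtchouk value R_j(q^{-l} - (d/c) q^{-l}; c/d, 2l; q), as given in the context.\<close>
definition dual_qKrawtchouk :: "nat \<Rightarrow> nat \<Rightarrow> real \<Rightarrow> real \<Rightarrow> real \<Rightarrow> real" where
  "dual_qKrawtchouk j l c d q =
     (\<Sum>k=0..j. qpoch (inverse (q ^ j)) q k * qpoch (inverse (q ^ l)) q k
                * qpoch (- (d / c) * inverse (q ^ l)) q k
                / (qpoch (inverse (q ^ (2 * l))) q k * qpoch q q k) * q ^ k)"

text \<open>Jacobi polynomial normalized by R_n(1) = 1: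
  R_n^{(a,b)}(x) = 2F1(-n, n+a+b+1; a+1; (1-x)/2).\<close>
definition jacobiR :: "real \<Rightarrow> real \<Rightarrow> nat \<Rightarrow> real \<Rightarrow> real" where
  "jacobiR a b n x =
     (\<Sum>k=0..n. pochhammer (- real n) k * pochhammer (real n + a + b + 1) k
                / (pochhammer (a + 1) k * fact k) * ((1 - x) / 2) ^ k)"

end

theory Submission
  imports Defs "HOL-Computational_Algebra.Polynomial"
begin

lemma aux_smult: "(of_nat c :: real poly) * [:a:]^k * p = smult (of_nat c * a^k) p"
  by (simp add: of_nat_poly poly_const_pow mult.commute)

lemma star:
  fixes z :: real and n m l :: nat
  assumes z: "z \<noteq> 1" and l: "l = n + m"
  shows "(\<Sum>k\<le>n. (-1)^k * real (n choose k) * real ((2*l-k) choose l) * z^k)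
       = (\<Sum>i\<le>n. (-1)^i * real (n choose i) * real ((l+m+i) choose l) * z^(n-i) * (z-1)^i)"
proof -
  define p1 :: "real poly" where "p1 = [:1,1:]"
  define P where "P = p1^(l+m) * [:1-z,1:]^n"
  define Q where "Q = p1^(l+m) * [:1,1-z:]^n"
  have r1: "reflect_poly p1 = p1" unfolding p1_def by (simp add: reflect_poly_def)
  have r2: "reflect_poly [:1-z,1:] = [:1,1-z:]" using z by (simp add: reflect_poly_def)
  have QP: "Q = reflect_poly P" unfolding P_def Q_def
    by (simp add: reflect_poly_mult reflect_poly_power r1 r2)
  have degP: "degree P = 2*l" unfolding P_def p1_def
    by (simp add: degree_mult_eq degree_power_eq l)
  have cq: "coeff Q l = coeff P l" using QP degP by (simp add: coeff_reflect_poly)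
  have "P = p1^(l+m) * ([:-z:] + p1)^n" unfolding P_def p1_def by simp
  also have "\<dots> = (\<Sum>k\<le>n. smult (real (n choose k) * (-z)^k) (p1^(2*l-k)))"
    unfolding binomial_ring sum_distrib_left
  proof (rule sum.cong[OF refl])
    fix k assume "k \<in> {..n}"
    hence "2*l-k = (n-k) + (l+m)" using l by auto
    thus "p1 ^ (l + m) * (of_nat (n choose k) * [:- z:] ^ k * p1 ^ (n - k)) = smult (real (n choose k) * (- z) ^ k) (p1 ^ (2 * l - k))"
    proof -
      have "p1 ^ (l + m) * (of_nat (n choose k) * [:- z:] ^ k * p1 ^ (n - k)) = p1 ^ (l + m) * smult (real (n choose k) * (- z) ^ k) (p1 ^ (n - k))"
        by (simp only: aux_smult)
      also have "\<dots> = smult (real (n choose k) * (- z) ^ k) (p1 ^ (n - k) * p1 ^ (l + m))"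
        by (simp add: mult.commute)
      finally show ?thesis using \<open>2*l-k = (n-k) + (l+m)\<close> by (simp only: power_add)
    qed
  qed
  finally have Pe: "P = \<dots>" .
  have "Q = p1^(l+m) * (smult (1-z) p1 + [:z:])^n" unfolding Q_def p1_def by simp
  also have "\<dots> = (\<Sum>i\<le>n. smult (real (n choose i) * (1-z)^i * z^(n-i)) (p1^(l+m+i)))"
    unfolding binomial_ring sum_distrib_left
  proof (rule sum.cong[OF refl])
    fix i assume "i \<in> {..n}"
    show "p1 ^ (l + m) * (of_nat (n choose i) * smult (1 - z) p1 ^ i * [:z:] ^ (n - i)) = smult (real (n choose i) * (1 - z) ^ i * z ^ (n - i)) (p1 ^ (l + m + i))"
    proof -
      have "of_nat (n choose i) * smult (1 - z) p1 ^ i * [:z:] ^ (n - i) = smult (real (n choose i) * (1 - z) ^ i * z ^ (n - i)) (p1^i)"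
        by (simp add: smult_power of_nat_poly poly_const_pow mult.commute mult.left_commute)
      thus ?thesis by (simp add: power_add)
    qed
  qed
  finally have Qe: "Q = \<dots>" .
  have cP: "coeff P l = (\<Sum>k\<le>n. (-1)^k * real (n choose k) * real ((2*l-k) choose l) * z^k)"
    unfolding Pe coeff_sum p1_def
  proof (rule sum.cong[OF refl])
    fix k assume "k \<in> {..n}"
    hence "l \<le> 2*l-k" using l by auto
    hence c1: "coeff ([:1,1:]^(2*l-k)) l = (real ((2*l-k) choose l) :: real)"
      using coeff_linear_poly_power[of l "2*l-k" "1::real" 1] by simp
    have c2: "(-z)^k = (-1)^k * z^k" by (rule power_minus)
    show "coeff (smult (real (n choose k) * (- z) ^ k) ([:1, 1:] ^ (2 * l - k))) l = (- 1) ^ k * real (n choose k) * real (2 * l - k choose l) * z ^ k"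
      unfolding coeff_smult c1 c2 by (simp only: mult_ac)
  qed
  have cQ: "coeff Q l = (\<Sum>i\<le>n. (-1)^i * real (n choose i) * real ((l+m+i) choose l) * z^(n-i) * (z-1)^i)"
    unfolding Qe coeff_sum p1_def
  proof (rule sum.cong[OF refl])
    fix i assume "i \<in> {..n}"
    have c2: "(1-z)^i = (-1)^i * (z-1)^i" by (simp add: power_minus[symmetric])
    have c1: "coeff ([:1,1:]^(l+m+i)) l = (real ((l+m+i) choose l) :: real)"
      using coeff_linear_poly_power[of l "l+m+i" "1::real" 1] by simp
    show "coeff (smult (real (n choose i) * (1 - z) ^ i * z ^ (n - i)) ([:1, 1:] ^ (l + m + i))) l = (- 1) ^ i * real (n choose i) * real (l + m + i choose l) * z ^ (n - i) * (z - 1) ^ i"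
      unfolding coeff_smult c1 c2 by (simp only: mult_ac)
  qed
  show ?thesis using cP cQ cq by simp
qed


lemma lim_ratio:
  "((\<lambda>q::real. (1 - inverse (q^N) * q^i) / (1 - q)) \<longlongrightarrow> real i - real N) (at_left 1)"
proof (cases "N \<le> i")
  case True
  have t: "((\<lambda>q::real. \<Sum>s<i-N. q^s) \<longlongrightarrow> (\<Sum>s<i-N. (1::real)^s)) (at_left 1)"
    by (intro tendsto_intros)
  have ev: "eventually (\<lambda>q::real. (\<Sum>s<i-N. q^s) = (1 - inverse (q^N) * q^i) / (1 - q)) (at_left 1)"
    using eventually_at_left_real[OF zero_less_one]
  proof (rule eventually_mono)
    fix q :: real assume q: "q \<in> {0<..<1}"
    have "inverse (q^N) * q^i = q^(i-N)" using q True
      by (simp add: power_diff field_simps)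
    thus "(\<Sum>s<i-N. q^s) = (1 - inverse (q^N) * q^i) / (1 - q)" using q
      by (simp add: sum_gp_strict)
  qed
  show ?thesis using Lim_transform_eventually[OF t ev] True by (simp add: of_nat_diff)
next
  case False
  have t: "((\<lambda>q::real. - (\<Sum>s<N-i. q^s) / q^(N-i)) \<longlongrightarrow> - (\<Sum>s<N-i. (1::real)^s) / 1^(N-i)) (at_left 1)"
    by (intro tendsto_intros) auto
  have ev: "eventually (\<lambda>q::real. - (\<Sum>s<N-i. q^s) / q^(N-i) = (1 - inverse (q^N) * q^i) / (1 - q)) (at_left 1)"
    using eventually_at_left_real[OF zero_less_one]
  proof (rule eventually_mono)
    fix q :: real assume q: "q \<in> {0<..<1}"
    have e: "q^N = q^(N-i) * q^i" using False by (simp add: power_add[symmetric])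
    have "inverse (q^N) * q^i = inverse (q^(N-i))" using q by (simp add: e field_simps)
    thus "- (\<Sum>s<N-i. q^s) / q^(N-i) = (1 - inverse (q^N) * q^i) / (1 - q)" using q
      by (simp add: sum_gp_strict field_simps)
  qed
  show ?thesis using Lim_transform_eventually[OF t ev] False by (simp add: of_nat_diff)
qed

lemma qpoch_ratio: "q \<noteq> 1 \<Longrightarrow> qpoch a q k = (1-q)^k * (\<Prod>i<k. (1 - a*q^i)/(1-q))"
proof -
  assume q: "q \<noteq> 1"
  have "(1-q)^k * (\<Prod>i<k. (1 - a*q^i)/(1-q)) = (\<Prod>i<k. (1-q) * ((1 - a*q^i)/(1-q)))"
    by (simp only: prod.distrib prod_constant card_lessThan)
  also have "\<dots> = (\<Prod>i<k. 1 - a*q^i)" using q by simp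
  finally show ?thesis unfolding qpoch_def by simp
qed

lemma cancel5: "(u::real) \<noteq> 0 \<Longrightarrow> (u*a)*(u*b)*c/((u*d)*(u*e))*r = a*b*c/(d*e)*r"
proof -
  assume u: "u \<noteq> 0"
  have "(u*a)*(u*b)*c/((u*d)*(u*e)) = (u*u)*(a*b*c)/((u*u)*(d*e))" by (simp only: mult_ac)
  also have "\<dots> = a*b*c/(d*e)" using u by (rule_tac mult_divide_mult_cancel_left) simp
  finally show ?thesis by simp
qed

lemma term_lim:
  fixes c d :: real and j l k :: nat
  assumes "k \<le> l"
  shows "((\<lambda>q. qpoch (inverse (q ^ j)) q k * qpoch (inverse (q ^ l)) q k
                * qpoch (- (d / c) * inverse (q ^ l)) q k
                / (qpoch (inverse (q ^ (2 * l))) q k * qpoch q q k) * q ^ k)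
         \<longlongrightarrow> pochhammer (- real j) k * pochhammer (- real l) k * (1 + d/c)^k
              / (pochhammer (- real (2*l)) k * fact k)) (at_left 1)"
proof -
  define A where "A = (\<lambda>N q. \<Prod>i<k. (1 - inverse ((q::real)^N) * q^i)/(1-q))"
  define E where "E = (\<lambda>q. \<Prod>i<k. (1 - inverse ((q::real)^0) * q^(Suc i))/(1-q))"
  have lA: "(A N \<longlongrightarrow> (\<Prod>i<k. real i - real N)) (at_left 1)" for N
    unfolding A_def by (intro tendsto_prod lim_ratio)
  have lE: "(E \<longlongrightarrow> (\<Prod>i<k. real (Suc i) - real 0)) (at_left 1)"
    unfolding E_def by (intro tendsto_prod lim_ratio)
  have lC: "((\<lambda>q. qpoch (- (d / c) * inverse (q ^ l)) q k) \<longlongrightarrow> (\<Prod>i<k. 1 - (- (d / c) * inverse (1 ^ l)) * 1 ^ i)) (at_left 1)"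
    unfolding qpoch_def by (intro tendsto_intros) auto
  have lq: "((\<lambda>q::real. q^k) \<longlongrightarrow> 1^k) (at_left 1)" by (intro tendsto_intros)
  have nz: "(\<Prod>i<k. real i - real (2*l)) * (\<Prod>i<k. real (Suc i) - real 0) \<noteq> 0"
    using assms by auto
  have L: "((\<lambda>q. A j q * A l q * qpoch (- (d / c) * inverse (q ^ l)) q k / (A (2*l) q * E q) * q^k)
     \<longlongrightarrow> (\<Prod>i<k. real i - real j) * (\<Prod>i<k. real i - real l) * (\<Prod>i<k. 1 - (- (d / c) * inverse (1 ^ l)) * 1 ^ i)
         / ((\<Prod>i<k. real i - real (2*l)) * (\<Prod>i<k. real (Suc i) - real 0)) * 1^k) (at_left 1)"
    by (intro tendsto_mult tendsto_divide lA lE lC lq nz)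
  have ev: "eventually (\<lambda>q. A j q * A l q * qpoch (- (d / c) * inverse (q ^ l)) q k / (A (2*l) q * E q) * q^k
     = qpoch (inverse (q ^ j)) q k * qpoch (inverse (q ^ l)) q k
                * qpoch (- (d / c) * inverse (q ^ l)) q k
                / (qpoch (inverse (q ^ (2 * l))) q k * qpoch q q k) * q ^ k) (at_left 1)"
    using eventually_at_left_real[OF zero_less_one]
  proof (rule eventually_mono)
    fix q :: real assume q: "q \<in> {0<..<1}"
    hence q1: "q \<noteq> 1" by auto
    have e1: "qpoch (inverse (q ^ N)) q k = (1-q)^k * A N q" for N
      unfolding A_def using qpoch_ratio[OF q1] by simp
    have e2: "qpoch q q k = (1-q)^k * E q"
      unfolding E_def using qpoch_ratio[OF q1] by simp
    have u: "(1-q)^k \<noteq> 0" using q by auto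
    show "A j q * A l q * qpoch (- (d / c) * inverse (q ^ l)) q k / (A (2*l) q * E q) * q^k
     = qpoch (inverse (q ^ j)) q k * qpoch (inverse (q ^ l)) q k
                * qpoch (- (d / c) * inverse (q ^ l)) q k
                / (qpoch (inverse (q ^ (2 * l))) q k * qpoch q q k) * q ^ k"
      unfolding e1 e2 using cancel5[OF u] by simp
  qed
  have v1: "(\<Prod>i<k. real i - real N) = pochhammer (- real N) k" for N
    by (simp add: pochhammer_prod lessThan_atLeast0)
  have v2: "(\<Prod>i<k. real (Suc i) - real 0) = fact k"
    by (simp add: fact_prod_Suc lessThan_atLeast0)
  have v3: "(\<Prod>i<k. 1 - (- (d / c) * inverse (1 ^ l)) * 1 ^ i) = (1 + d/c)^k" by simp
  show ?thesis using Lim_transform_eventually[OF L ev] unfolding v1 v2 v3 by simp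
qed


lemma poch_pos: "pochhammer (real a + 1) k = fact (a+k) / fact a"
proof (induct k)
  case 0 then show ?case by simp
next
  case (Suc k)
  have f: "fact (a + Suc k) = (real (a+k) + 1) * (fact (a+k) :: real)" by simp
  show ?case unfolding f pochhammer_Suc Suc by (simp add: field_simps)
qed

lemma poch_neg: "k \<le> N \<Longrightarrow> pochhammer (- real N) k = (-1)^k * fact N / fact (N-k)"
proof -
  assume k: "k \<le> N"
  have "real N - real k + 1 = real (N-k) + 1" using k by (simp add: of_nat_diff)
  thus ?thesis using poch_pos[of "N-k" k] k by (simp add: pochhammer_minus)
qed

lemma lhs_term:
  fixes z :: real and n m l k :: nat
  assumes l: "l = n + m" and k: "k \<le> n"
  shows "pochhammer (- real n) k * pochhammer (- real l) k * z^k / (pochhammer (- real (2*l)) k * fact k)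
     = fact l ^ 2 / fact (2*l) * ((-1)^k * real (n choose k) * real ((2*l-k) choose l) * z^k)"
proof -
  have e: "2*l-k-l = l-k" by simp
  have b1: "real (n choose k) = fact n / (fact k * fact (n-k))" using k by (rule binomial_fact)
  have le: "l \<le> 2*l-k" using k l by simp
  have b2: "real ((2*l-k) choose l) = fact (2*l-k) / (fact l * fact (l-k))"
    using binomial_fact[OF le, where 'a=real] unfolding e .
  have q1: "pochhammer (- real n) k = (-1)^k * fact n / fact (n-k)" using k by (rule poch_neg)
  have q2: "pochhammer (- real l) k = (-1)^k * fact l / fact (l-k)" using k l by (intro poch_neg) simp
  have q3: "pochhammer (- real (2*l)) k = (-1)^k * fact (2*l) / fact (2*l-k)" using k l by (intro poch_neg) simp
  show ?thesis unfolding q1 q2 q3 b1 b2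
    by (simp add: field_simps power2_eq_square)
qed

lemma rhs_term:
  fixes z :: real and n m l i :: nat
  assumes l: "l = n + m" and i: "i \<le> n" and z: "z \<noteq> 0"
  shows "pochhammer (real m + 1) n / pochhammer (real l + real m + 1) n * z^n *
      (pochhammer (- real n) i * pochhammer (real n + real m + real m + 1) i
                / (pochhammer (real m + 1) i * fact i) * ((z-1)/z) ^ i)
     = fact l ^ 2 / fact (2*l) * ((-1)^i * real (n choose i) * real ((l+m+i) choose l) * z^(n-i) * (z-1)^i)"
proof -
  have e: "l+m+i-l = m+i" by simp
  have b1: "real (n choose i) = fact n / (fact i * fact (n-i))" using i by (rule binomial_fact)
  have b2: "real ((l+m+i) choose l) = fact (l+m+i) / (fact l * fact (m+i))"
    using binomial_fact[of l "l+m+i", where 'a=real] by (simp add: e)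
  have p1: "pochhammer (real m + 1) n = fact l / fact m" using poch_pos[of m n] l by (simp add: add.commute)
  have e2: "l+m+n = 2*l" using l by simp
  have r1: "real l + real m = real (l+m)" by simp
  have r2: "real n + real m + real m = real (l+m)" using l by simp
  have p2: "pochhammer (real l + real m + 1) n = fact (2*l) / fact (l+m)"
    using poch_pos[of "l+m" n] unfolding r1 e2 .
  have p3: "pochhammer (real n + real m + real m + 1) i = fact (l+m+i) / fact (l+m)"
    using poch_pos[of "l+m" i] unfolding r2 .
  have p4: "pochhammer (real m + 1) i = fact (m+i) / fact m" using poch_pos[of m i] by simp
  have zz: "z^n = z^(n-i) * z^i" using i by (simp add: power_add[symmetric])
  have q1: "pochhammer (- real n) i = (-1)^i * fact n / fact (n-i)" using i by (rule poch_neg)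
  show ?thesis unfolding p1 p2 p3 p4 zz q1 b1 b2 using z
    by (simp add: field_simps power2_eq_square power_divide)
qed

theorem mainTheorem7:
  fixes c d :: real and l m :: nat
  assumes "c > 0" and "d > 0" and "l > 0" and "m \<le> l"
  shows "((\<lambda>q. dual_qKrawtchouk (l - m) l c d q) \<longlongrightarrow>
           pochhammer (real m + 1) (l - m) / pochhammer (real l + real m + 1) (l - m)
           * (1 + d / c) ^ (l - m)
           * jacobiR (real m) (real m) (l - m) ((c - d) / (c + d))) (at_left 1)"
proof -
  define n where "n = l - m"
  have l: "l = n + m" using assms(4) n_def by simp
  define z where "z = 1 + d/c"
  have z1: "z \<noteq> 1" and z0: "z \<noteq> 0" using assms(1,2) by (auto simp: z_def) (smt (verit) divide_pos_pos)
  have xz: "(1 - (c - d) / (c + d)) / 2 = (z-1)/z" using assms(1,2) unfolding z_def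
    by (simp add: field_simps)
  have L: "((\<lambda>q. dual_qKrawtchouk n l c d q) \<longlongrightarrow>
     (\<Sum>k=0..n. pochhammer (- real n) k * pochhammer (- real l) k * z^k
              / (pochhammer (- real (2*l)) k * fact k))) (at_left 1)"
    unfolding dual_qKrawtchouk_def z_def
    by (intro tendsto_sum term_lim) (auto simp: l)
  have S1: "(\<Sum>k=0..n. pochhammer (- real n) k * pochhammer (- real l) k * z^k
              / (pochhammer (- real (2*l)) k * fact k))
     = fact l ^ 2 / fact (2*l) * (\<Sum>k\<le>n. (-1)^k * real (n choose k) * real ((2*l-k) choose l) * z^k)"
    unfolding sum_distrib_left atLeast0AtMost by (rule sum.cong[OF refl]) (intro lhs_term[OF l], simp)
  have S2: "pochhammer (real m + 1) n / pochhammer (real l + real m + 1) n * z ^ n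
           * jacobiR (real m) (real m) n ((c - d) / (c + d))
     = fact l ^ 2 / fact (2*l) * (\<Sum>i\<le>n. (-1)^i * real (n choose i) * real ((l+m+i) choose l) * z^(n-i) * (z-1)^i)"
    unfolding jacobiR_def xz sum_distrib_left atLeast0AtMost
    by (rule sum.cong[OF refl]) (intro rhs_term[OF l _ z0], simp)
  have eq: "(\<Sum>k=0..n. pochhammer (- real n) k * pochhammer (- real l) k * z^k
              / (pochhammer (- real (2*l)) k * fact k)) = pochhammer (real m + 1) n / pochhammer (real l + real m + 1) n * z ^ n
           * jacobiR (real m) (real m) n ((c - d) / (c + d))"
    unfolding S1 S2 star[OF z1 l] ..
  from L[unfolded eq] show ?thesis unfolding n_def z_def .
qed

end
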